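(* An element $r\in\mathrm{Im}(1\otimes1-\tau)\subset\mathfrak{L}\otimes\mathfrak{L}$ satisfies the classical Yang–Baxter equation $c(r)=0$ if and only if it satisfies the modified Yang–Baxter equation $x\circ c(r)=0$ for all $x\in\mathfrak{L}$.
   Context: Let $\Gamma$ be a nontrivial additive subgroup of $\mathbb{R}$, and let $s\in\mathbb{R}$ with $2s\in\Gamma$. The Lie superalgebra $\mathfrak{L}$ over $\mathbb{C}$ has basis $\{L_p,I_p,G_r,H_r\mid p\in\Gamma,\ r\in s+\Gamma\}$. Here $L_p,I_p$ are even and $G_r,H_r$ are odd. The nonzero super-brackets are $[L_p,L_q]=(p-q)L_{p+q}$, $[L_p,I_q]=(p-q)I_{p+q}$, $[L_p,G_r]=(\tfrac p2-r)G_{p+r}$, $[L_p,H_r]=(\tfrac p2-r)H_{p+r}$, $[G_r,G_t]=I_{r+t}$, $[I_p,G_r]=(p-2r)H_{p+r}$. All other brackets of basis elements vanish, apart from those forced by super-antisymmetry. Conventions: - $[x]$ is the parity of $x$, and $\tau(x\otimes y)=(-1)^{[x][y]}y\otimes x$. - $\mathfrak{L}$ acts on tensor powers of itself by the diagonal adjoint action, e.g. $x\circ(a\otimes b)=[x,a]\otimes b+(-1)^{[x][a]}a\otimes[x,b]$, and similarly on triple tensors with the Koszul sign rule. For $r=\sum_i a_i\otimes b_i$ with homogeneous $a_i,b_i$, define $c(r)=\sum_{i,j}\Big((-1)^{[a_j][b_i]}[a_i,a_j]\otimes b_i\otimes b_j+a_i\otimes[b_i,a_j]\otimes b_j+(-1)^{[a_j][b_i]}a_i\otimes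 a_j\otimes[b_i,b_j]\Big)\in\mathfrak{L}^{\otimes3}$. *)

theory Defs
  imports Complex_Main
begin

text \<open>Basis of the Lie superalgebra: L_p, I_p (even), G_r, H_r (odd).
  Elements of the algebra and of its tensor powers are represented by their
  coefficient functions with respect to this basis (resp. the induced tensor
  basis), required to be finitely supported on the admissible index sets.\<close>

datatype bas = L real | I real | G real | H real

fun odd_b :: "bas \<Rightarrow> bool" where
  "odd_b (L _) = False" | "odd_b (I _) = False"
| "odd_b (G _) = True"  | "odd_b (H _) = True"

definition sg :: "bas \<Rightarrow> bas \<Rightarrow> complex" where
  "sg a b = (if odd_b a \<and> odd_b b then -1 else 1)"

definition supp :: "('a \<Rightarrow> complex) \<Rightarrow> 'a set" where
  "supp f = {x. f x \<noteq> 0}"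

definition bv :: "complex \<Rightarrow> bas \<Rightarrow> bas \<Rightarrow> complex" where
  "bv c b = (\<lambda>x. if x = b then c else 0)"

definition dl :: "bas \<Rightarrow> bas \<Rightarrow> complex" where
  "dl a b = (if a = b then 1 else 0)"

text \<open>Super-bracket of basis elements (including those forced by super-antisymmetry).\<close>
fun br :: "bas \<Rightarrow> bas \<Rightarrow> bas \<Rightarrow> complex" where
  "br (L p) (L q) = bv (of_real (p - q)) (L (p + q))"
| "br (L p) (I q) = bv (of_real (p - q)) (I (p + q))"
| "br (I q) (L p) = bv (- of_real (p - q)) (I (p + q))"
| "br (L p) (G r) = bv (of_real (p/2 - r)) (G (p + r))"
| "br (G r) (L p) = bv (- of_real (p/2 - r)) (G (p + r))"
| "br (L p) (H r) = bv (of_real (p/2 - r)) (H (p + r))"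
| "br (H r) (L p) = bv (- of_real (p/2 - r)) (H (p + r))"
| "br (G r) (G t) = bv 1 (I (r + t))"
| "br (I p) (G r) = bv (of_real (p - 2*r)) (H (p + r))"
| "br (G r) (I p) = bv (- of_real (p - 2*r)) (H (p + r))"
| "br _ _ = (\<lambda>_. 0)"

fun adm :: "real set \<Rightarrow> real \<Rightarrow> bas \<Rightarrow> bool" where
  "adm \<Gamma> s (L p) = (p \<in> \<Gamma>)" | "adm \<Gamma> s (I p) = (p \<in> \<Gamma>)"
| "adm \<Gamma> s (G r) = (r - s \<in> \<Gamma>)" | "adm \<Gamma> s (H r) = (r - s \<in> \<Gamma>)"

definition Lsp :: "real set \<Rightarrow> real \<Rightarrow> (bas \<Rightarrow> complex) set" where
  "Lsp \<Gamma> s = {u. finite (supp u) \<and> (\<forall>a\<in>supp u. adm \<Gamma> s a)}"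

definition Lsp2 :: "real set \<Rightarrow> real \<Rightarrow> (bas \<times> bas \<Rightarrow> complex) set" where
  "Lsp2 \<Gamma> s = {t. finite (supp t) \<and> (\<forall>(a,b)\<in>supp t. adm \<Gamma> s a \<and> adm \<Gamma> s b)}"

text \<open>The flip \<tau>(a \<otimes> b) = (-1)^([a][b]) b \<otimes> a, on coefficient functions.\<close>
definition tau :: "(bas \<times> bas \<Rightarrow> complex) \<Rightarrow> bas \<times> bas \<Rightarrow> complex" where
  "tau t = (\<lambda>(p,q). sg p q * t (q,p))"

definition ImTau :: "real set \<Rightarrow> real \<Rightarrow> (bas \<times> bas \<Rightarrow> complex) set" where
  "ImTau \<Gamma> s = {(\<lambda>z. t z - tau t z) | t. t \<in> Lsp2 \<Gamma> s}"

definition cybe :: "(bas \<times> bas \<Rightarrow> complex) \<Rightarrow> bas \<times> bas \<times> bas \<Rightarrow> complex" where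
  "cybe r = (\<lambda>(z1,z2,z3). \<Sum>(a,b)\<in>supp r. \<Sum>(a',b')\<in>supp r. r (a,b) * r (a',b') *
      ( sg a' b * br a a' z1 * dl b z2 * dl b' z3
      + dl a z1 * br b a' z2 * dl b' z3
      + sg a' b * dl a z1 * dl a' z2 * br b b' z3))"

definition actb :: "bas \<Rightarrow> (bas \<times> bas \<times> bas \<Rightarrow> complex) \<Rightarrow> bas \<times> bas \<times> bas \<Rightarrow> complex" where
  "actb x T = (\<lambda>(z1,z2,z3). \<Sum>(a,b,c)\<in>supp T. T (a,b,c) *
      ( br x a z1 * dl b z2 * dl c z3
      + sg x a * dl a z1 * br x b z2 * dl c z3
      + sg x a * sg x b * dl a z1 * dl b z2 * br x c z3))"

definition act :: "(bas \<Rightarrow> complex) \<Rightarrow> (bas \<times> bas \<times> bas \<Rightarrow> complex) \<Rightarrow> bas \<times> bas \<times> bas \<Rightarrow> complex" where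
  "act u T = (\<lambda>z. \<Sum>x\<in>supp u. u x * actb x T z)"

end

theory Submission
  imports Defs
begin

fun idx :: "bas \<Rightarrow> real" where
  "idx (L p) = p" | "idx (I p) = p" | "idx (G p) = p" | "idx (H p) = p"

fun shift :: "real \<Rightarrow> bas \<Rightarrow> bas" where
  "shift p (L q) = L (p + q)" | "shift p (I q) = I (p + q)"
| "shift p (G q) = G (p + q)" | "shift p (H q) = H (p + q)"

fun co :: "real \<Rightarrow> bas \<Rightarrow> real" where
  "co p (L q) = p - q" | "co p (I q) = p - q"
| "co p (G q) = p/2 - q" | "co p (H q) = p/2 - q"

lemma br_L: "br (L p) a = bv (complex_of_real (co p a)) (shift p a)"
  by (cases a) auto

lemma sg_L: "sg (L p) a = 1"
  by (simp add: sg_def)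

lemma idx_shift: "idx (shift p a) = p + idx a"
  by (cases a) auto

lemma shift_inj: "shift p a = shift p a' \<Longrightarrow> a = a'"
  by (cases a; cases a') auto

lemma key:
  assumes fin: "finite (supp T)" and t0: "(a0,b0,c0) \<in> supp T"
    and mx: "\<And>a b c. (a,b,c) \<in> supp T \<Longrightarrow> idx a \<le> idx a0"
    and p: "p > 0" and cz: "co p a0 \<noteq> 0"
  shows "actb (L p) T (shift p a0, b0, c0) \<noteq> 0"
proof -
  let ?f = "\<lambda>(a,b,c). T (a,b,c) *
      ( br (L p) a (shift p a0) * dl b b0 * dl c c0
      + sg (L p) a * dl a (shift p a0) * br (L p) b b0 * dl c c0
      + sg (L p) a * sg (L p) b * dl a (shift p a0) * dl b b0 * br (L p) c c0)"
  have eq: "?f t = (if t = (a0,b0,c0) then T (a0,b0,c0) * complex_of_real (co p a0) else 0)"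
    if "t \<in> supp T" for t
  proof -
    obtain a b c where t: "t = (a,b,c)" by (cases t) auto
    have ia: "idx a \<le> idx a0" using mx that t by blast
    have 2: "dl a (shift p a0) = 0"
    proof -
      have "a \<noteq> shift p a0" using ia p idx_shift[of p a0] by auto
      thus ?thesis by (simp add: dl_def)
    qed
    have 1: "bv (complex_of_real (co p a)) (shift p a) (shift p a0) * dl b b0 * dl c c0
       = (if (a,b,c) = (a0,b0,c0) then complex_of_real (co p a0) else 0)"
      using shift_inj[of p a a0] by (auto simp: bv_def dl_def)
    show ?thesis using 1 2 t by (simp add: br_L sg_L)
  qed
  have "actb (L p) T (shift p a0, b0, c0) = sum ?f (supp T)"
    by (simp add: actb_def)
  also have "\<dots> = sum (\<lambda>t. if t = (a0,b0,c0) then T (a0,b0,c0) * complex_of_real (co p a0) else 0) (supp T)"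
    by (rule sum.cong) (use eq in auto)
  also have "\<dots> = T (a0,b0,c0) * complex_of_real (co p a0)"
    using fin t0 by simp
  also have "\<dots> \<noteq> 0" using t0 cz by (simp add: supp_def)
  finally show ?thesis .
qed

lemma fin_br: "finite (supp (br a b))"
proof -
  have "supp (bv c x) \<subseteq> {x}" for c x by (auto simp: supp_def bv_def)
  hence fb: "finite {z. bv c x z \<noteq> 0}" for c x unfolding supp_def by (meson finite.emptyI finite_insert finite_subset)
  show ?thesis by (cases a; cases b) (simp_all only: br.simps supp_def fb, simp_all)
qed

lemma fin_cybe:
  assumes "finite (supp r)"
  shows "finite (supp (cybe r))"
proof -
  define B0 where "B0 = fst ` supp r \<union> snd ` supp r"
  define B where "B = B0 \<union> (\<Union>a\<in>B0. \<Union>a'\<in>B0. supp (br a a'))"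
  have fB: "finite B" unfolding B_def B0_def using assms fin_br by auto
  have "supp (cybe r) \<subseteq> B \<times> B \<times> B"
  proof
    fix z assume z: "z \<in> supp (cybe r)"
    obtain z1 z2 z3 where zz: "z = (z1,z2,z3)" by (cases z) auto
    show "z \<in> B \<times> B \<times> B"
    proof (rule ccontr)
      assume nz: "z \<notin> B \<times> B \<times> B"
      have nz': "\<not> (z1 \<in> B \<and> z2 \<in> B \<and> z3 \<in> B)" using nz zz by auto
      have H: "r (a,b) * r (a',b') *
      ( sg a' b * br a a' z1 * dl b z2 * dl b' z3
      + dl a z1 * br b a' z2 * dl b' z3
      + sg a' b * dl a z1 * dl a' z2 * br b b' z3) = 0"
        if "(a,b) \<in> supp r" "(a',b') \<in> supp r" for a b a' b'
      proof -
        have inB: "a \<in> B0" "b \<in> B0" "a' \<in> B0" "b' \<in> B0"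
          using that unfolding B0_def by force+
        have "z1 \<notin> B \<or> z2 \<notin> B \<or> z3 \<notin> B" using nz' by auto
        moreover have "z1 \<notin> B \<Longrightarrow> br a a' z1 = 0 \<and> dl a z1 = 0"
          using inB unfolding B_def supp_def dl_def by auto
        moreover have "z2 \<notin> B \<Longrightarrow> dl b z2 = 0 \<and> br b a' z2 = 0 \<and> dl a' z2 = 0"
          using inB unfolding B_def supp_def dl_def by auto
        moreover have "z3 \<notin> B \<Longrightarrow> dl b' z3 = 0 \<and> br b b' z3 = 0"
          using inB unfolding B_def supp_def dl_def by auto
        ultimately show ?thesis by auto
      qed
      have "cybe r z = 0"
        unfolding cybe_def zz
        by (auto intro!: sum.neutral simp: H split: prod.split)
      thus False using z by (simp add: supp_def)
    qed
  qed
  thus ?thesis using fB by (meson finite_SigmaI finite_subset)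
qed


lemma supp_bvL: "supp (bv 1 (L p)) = {L p}"
  by (auto simp: supp_def bv_def)

lemma act_bvL: "act (bv 1 (L p)) T = actb (L p) T"
  by (rule ext) (simp only: act_def supp_bvL, simp add: bv_def)

lemma co_choice: "g \<noteq> 0 \<Longrightarrow> co g a \<noteq> 0 \<or> co (g+g) a \<noteq> 0"
  by (cases a) auto

theorem mainTheorem5:
  fixes \<Gamma> :: "real set" and s :: real and r :: "bas \<times> bas \<Rightarrow> complex"
  assumes "0 \<in> \<Gamma>" and "\<forall>p\<in>\<Gamma>. \<forall>q\<in>\<Gamma>. p + q \<in> \<Gamma>" and "\<forall>p\<in>\<Gamma>. - p \<in> \<Gamma>"
    and "\<Gamma> \<noteq> {0}"
    and "2 * s \<in> \<Gamma>"
    and "r \<in> ImTau \<Gamma> s"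
  shows "cybe r = (\<lambda>_. 0) \<longleftrightarrow> (\<forall>x\<in>Lsp \<Gamma> s. act x (cybe r) = (\<lambda>_. 0))"
proof
  assume "cybe r = (\<lambda>_. 0)"
  thus "\<forall>x\<in>Lsp \<Gamma> s. act x (cybe r) = (\<lambda>_. 0)"
    by (simp add: act_def actb_def supp_def)
next
  assume A: "\<forall>x\<in>Lsp \<Gamma> s. act x (cybe r) = (\<lambda>_. 0)"
  obtain t where t: "t \<in> Lsp2 \<Gamma> s" and rt: "r = (\<lambda>z. t z - tau t z)"
    using assms(6) unfolding ImTau_def by blast
  have ft: "finite (supp t)" using t unfolding Lsp2_def by auto
  have "supp r \<subseteq> supp t \<union> (\<lambda>(p,q). (q,p)) ` supp t"
  proof
    fix z assume z: "z \<in> supp r"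
    obtain p q where zz: "z = (p,q)" by (cases z) auto
    show "z \<in> supp t \<union> (\<lambda>(p,q). (q,p)) ` supp t"
    proof (cases "t (q,p) = 0")
      case True
      hence "t (p,q) \<noteq> 0" using z zz rt by (auto simp: supp_def tau_def)
      thus ?thesis using zz by (auto simp: supp_def)
    next
      case False
      hence "(q,p) \<in> supp t" by (simp add: supp_def)
      hence "(p,q) \<in> (\<lambda>(p,q). (q,p)) ` supp t" by force
      thus ?thesis using zz by auto
    qed
  qed
  hence fr: "finite (supp r)" using ft by (meson finite_Un finite_imageI finite_subset)
  define T where "T = cybe r"
  have fT: "finite (supp T)" unfolding T_def using fin_cybe[OF fr] .
  show "cybe r = (\<lambda>_. 0)"
  proof (rule ccontr)
    assume "cybe r \<noteq> (\<lambda>_. 0)"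
    hence ne: "supp T \<noteq> {}" unfolding T_def supp_def by auto
    define m where "m = Max ((\<lambda>t. idx (fst t)) ` supp T)"
    have "m \<in> (\<lambda>t. idx (fst t)) ` supp T" unfolding m_def using fT ne by simp
    then obtain a0 b0 c0 where t0: "(a0,b0,c0) \<in> supp T" and m: "m = idx a0" by force
    have mx: "idx a \<le> idx a0" if "(a,b,c) \<in> supp T" for a b c
    proof -
      have "idx (fst (a,b,c)) \<le> m" unfolding m_def using fT that by (intro Max_ge) force+
      thus ?thesis using m by simp
    qed
    obtain g0 where g0: "g0 \<in> \<Gamma>" "g0 \<noteq> 0" using assms(1,4) by blast
    obtain g where g: "g \<in> \<Gamma>" "g > 0"
    proof (cases "g0 > 0")
      case True thus ?thesis using that g0 by blast
    next
      case False thus ?thesis using that[of "-g0"] g0 assms(3) by auto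
    qed
    obtain p where p: "p \<in> \<Gamma>" "p > 0" "co p a0 \<noteq> 0"
    proof (cases "co g a0 = 0")
      case True
      hence "co (g+g) a0 \<noteq> 0" using co_choice[of g a0] g by auto
      moreover have "g+g \<in> \<Gamma>" using g assms(2) by blast
      ultimately show ?thesis using that[of "g+g"] g by simp
    next
      case False thus ?thesis using that g by auto
    qed
    have "bv 1 (L p) \<in> Lsp \<Gamma> s" unfolding Lsp_def using supp_bvL p by auto
    hence "act (bv 1 (L p)) T = (\<lambda>_. 0)" using A unfolding T_def by blast
    hence "actb (L p) T (shift p a0, b0, c0) = 0" by (simp add: act_bvL)
    moreover have "actb (L p) T (shift p a0, b0, c0) \<noteq> 0"
      apply (rule key[OF fT t0])
      apply (erule mx)
      using p by auto
    ultimately show False by simp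
  qed
qed

end
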